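(* Let $k$ be a non-negative integer, $a_0,\dots,a_k\in\mathbb{C}$, and suppose $\Lambda=\sum_{i=0}^{k}a_i(Dx)^iD$ is a lowering operator. Let $\{B_n\}_{n\ge0}$ be a monic polynomial sequence with dual sequence $\{u_n\}_{n\ge0}$. The following statements are equivalent: (a) $\{B_n\}$ is $\Lambda$-Appell, i.e. $B^{[1]}_n(x;\Lambda)=B_n(x)$ for all $n\ge0$, where $B^{[1]}_n(x;\Lambda)=(n+1)^{-1}\big(\sum_{i=0}^{k}a_i(n+1)^i\big)^{-1}(\Lambda B_{n+1})(x)$; (b) ${}^t\Lambda(u_n)=\rho_nu_{n+1}$ for all $n\ge0$, where $\rho_n=(n+1)\sum_{i=0}^{k}a_i(n+1)^i$; (c) for all $n\ge0$, $u_n=(n!)^{-1}\Big(\prod_{s=1}^{n}\sum_{i=0}^{k}a_is^i\Big)^{-1}({}^t\Lambda)^nu_0$. Here ${}^t\Lambda=\sum_{i=0}^{k}a_i(-1)^{i+1}(Dx)^iD$ acting on forms.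
   Context: $\mathcal{P}$ is the space of complex polynomials, $\mathcal{P}'$ its algebraic dual, $\langle u,p\rangle$ the action of a form on a polynomial. $D$ is the derivative, $x$ multiplication by $x$, products are compositions. A lowering operator is a linear map $\mathcal{O}:\mathcal{P}\to\mathcal{P}$ with $\mathcal{O}(1)=0$ and $\deg\mathcal{O}(x^n)=n-1$, $n\ge1$. A monic polynomial sequence (MPS) is a sequence $\{B_n\}_{n\ge0}$ with $B_n$ monic of degree $n$; its dual sequence is the unique $\{u_n\}\subset\mathcal{P}'$ with $\langle u_n,B_m\rangle=\delta_{n,m}$. Transposes: $\langle {}^tT u,p\rangle=\langle u,Tp\rangle$; on forms $\langle Du,p\rangle=-\langle u,p'\rangle$ and $\langle xu,p\rangle=\langle u,xp\rangle$. *)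

theory Defs
  imports "HOL-Computational_Algebra.Polynomial"
begin

definition is_form :: "(complex poly \<Rightarrow> complex) \<Rightarrow> bool" where
  "is_form u \<longleftrightarrow> (\<forall>p q. u (p + q) = u p + u q) \<and> (\<forall>c p. u (smult c p) = c * u p)"

definition Dx :: "complex poly \<Rightarrow> complex poly" where
  "Dx p = pderiv ([:0, 1:] * p)"

definition Lambda_op :: "nat \<Rightarrow> (nat \<Rightarrow> complex) \<Rightarrow> complex poly \<Rightarrow> complex poly" where
  "Lambda_op k a p = (\<Sum>i=0..k. smult (a i) ((Dx ^^ i) (pderiv p)))"

definition lowering_op :: "(complex poly \<Rightarrow> complex poly) \<Rightarrow> bool" where
  "lowering_op L \<longleftrightarrow>
     (\<forall>p q. L (p + q) = L p + L q) \<and> (\<forall>c p. L (smult c p) = smult c (L p)) \<and>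
     L 1 = 0 \<and> (\<forall>n\<ge>1. L (monom 1 n) \<noteq> 0 \<and> degree (L (monom 1 n)) = n - 1)"

definition transp_op :: "(complex poly \<Rightarrow> complex poly) \<Rightarrow> (complex poly \<Rightarrow> complex) \<Rightarrow> (complex poly \<Rightarrow> complex)" where
  "transp_op T u = (\<lambda>p. u (T p))"

definition MPS :: "(nat \<Rightarrow> complex poly) \<Rightarrow> bool" where
  "MPS B \<longleftrightarrow> (\<forall>n. degree (B n) = n \<and> lead_coeff (B n) = 1)"

definition dual_seq :: "(nat \<Rightarrow> complex poly) \<Rightarrow> (nat \<Rightarrow> complex poly \<Rightarrow> complex) \<Rightarrow> bool" where
  "dual_seq B u \<longleftrightarrow> (\<forall>n. is_form (u n)) \<and> (\<forall>n m. u n (B m) = (if n = m then 1 else 0))"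

definition B1 :: "nat \<Rightarrow> (nat \<Rightarrow> complex) \<Rightarrow> (nat \<Rightarrow> complex poly) \<Rightarrow> nat \<Rightarrow> complex poly" where
  "B1 k a B n = smult (inverse (of_nat (n+1)) * inverse (\<Sum>i=0..k. a i * of_nat (n+1) ^ i))
                   (Lambda_op k a (B (n+1)))"

definition rho :: "nat \<Rightarrow> (nat \<Rightarrow> complex) \<Rightarrow> nat \<Rightarrow> complex" where
  "rho k a n = of_nat (n+1) * (\<Sum>i=0..k. a i * of_nat (n+1) ^ i)"

end

theory Submission
  imports Defs
begin

definition sig :: "nat \<Rightarrow> (nat \<Rightarrow> complex) \<Rightarrow> nat \<Rightarrow> complex" where
  "sig k a s = (\<Sum>i=0..k. a i * of_nat s ^ i)"

lemma pderiv_monom: "pderiv (monom c m) = monom (c * of_nat m) (m - 1)"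
  by (cases m) (auto simp: pderiv_monom mult.commute)

lemma Dx_monom: "Dx (monom c j) = monom (c * of_nat (Suc j)) j"
proof -
  have "[:0, 1:] * monom c j = monom c (Suc j)"
    by (simp add: monom_Suc)
  then show ?thesis unfolding Dx_def by (simp add: pderiv_monom)
qed

lemma Dx_pow_monom: "(Dx ^^ i) (monom c j) = monom (c * of_nat (Suc j) ^ i) j"
  by (induction i) (auto simp: Dx_monom mult.assoc mult.commute)

lemma Lambda_monom:
  "Lambda_op k a (monom 1 (Suc n)) = monom (rho k a n) n"
proof -
  have "Lambda_op k a (monom 1 (Suc n)) =
        (\<Sum>i=0..k. monom (a i * (of_nat (Suc n) * of_nat (Suc n) ^ i)) n)"
    unfolding Lambda_op_def by (simp add: pderiv_monom Dx_pow_monom smult_monom)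
  also have "\<dots> = monom (\<Sum>i=0..k. a i * (of_nat (Suc n) * of_nat (Suc n) ^ i)) n"
    by (simp add: monom_sum)
  also have "(\<Sum>i=0..k. a i * (of_nat (Suc n) * of_nat (Suc n) ^ i)) = rho k a n"
    unfolding rho_def by (simp add: sum_distrib_left algebra_simps)
  finally show ?thesis .
qed

lemma rho_nz:
  assumes "lowering_op (Lambda_op k a)"
  shows "rho k a n \<noteq> 0"
proof
  assume "rho k a n = 0"
  then have "Lambda_op k a (monom 1 (Suc n)) = 0" by (simp add: Lambda_monom)
  with assms show False unfolding lowering_op_def by auto
qed

lemma degree_Dx: "degree (Dx p) \<le> degree p"
proof -
  have "degree (pderiv ([:0, 1:] * p)) \<le> degree ([:0, 1:] * p) - 1"
    by (simp add: degree_pderiv)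
  moreover have "degree ([:0, 1:] * p) \<le> degree p + 1"
    using degree_mult_le[of "[:0, 1:]" p] by simp
  ultimately show ?thesis unfolding Dx_def by linarith
qed

lemma degree_Dx_pow: "degree ((Dx ^^ i) p) \<le> degree p"
  by (induction i) (auto intro: order_trans[OF degree_Dx])

lemma degree_Lambda: "degree (Lambda_op k a p) \<le> degree p - 1"
  unfolding Lambda_op_def
proof (rule degree_sum_le)
  fix i
  have "degree (smult (a i) ((Dx ^^ i) (pderiv p))) \<le> degree (pderiv p)"
    using degree_Dx_pow degree_smult_le order_trans by blast
  also have "\<dots> \<le> degree p - 1" by (simp add: degree_pderiv)
  finally show "degree (smult (a i) ((Dx ^^ i) (pderiv p))) \<le> degree p - 1" .
qed auto

lemma form_zero: "is_form u \<Longrightarrow> u 0 = 0"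
  unfolding is_form_def by (metis mult_zero_left smult_0_left)

lemma form_sum: "is_form u \<Longrightarrow> u (\<Sum>m\<in>A. f m) = (\<Sum>m\<in>A. u (f m))"
  by (induction A rule: infinite_finite_induct) (auto simp: form_zero is_form_def)

lemma lowering_zero: "lowering_op L \<Longrightarrow> L 0 = 0"
  unfolding lowering_op_def by (metis smult_0_left)

lemma lowering_sum: "lowering_op L \<Longrightarrow> L (\<Sum>m\<in>A. f m) = (\<Sum>m\<in>A. L (f m))"
  by (induction A rule: infinite_finite_induct) (auto simp: lowering_zero lowering_op_def)

lemma expand_exists:
  assumes "MPS B"
  shows "degree p \<le> N \<Longrightarrow> \<exists>c. p = (\<Sum>m\<le>N. smult (c m) (B m))"
proof (induction N arbitrary: p)
  case 0
  have B0: "B 0 = 1"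
    using assms unfolding MPS_def by (metis degree_0_id one_pCons)
  from 0 have "p = [:coeff p 0:]"
    using degree_0_id[of p] by simp
  then have "p = smult (coeff p 0) (B 0)" by (simp add: B0)
  then show ?case by auto
next
  case (Suc N)
  define q where "q = p - smult (coeff p (Suc N)) (B (Suc N))"
  have dB: "degree (B (Suc N)) = Suc N" "coeff (B (Suc N)) (Suc N) = 1"
    using assms unfolding MPS_def by metis+
  have "degree q \<le> N"
  proof (rule degree_le, intro allI impI)
    fix i assume "N < i"
    show "coeff q i = 0"
    proof (cases "i = Suc N")
      case True then show ?thesis using dB by (simp add: q_def)
    next
      case False
      with \<open>N < i\<close> have "Suc N < i" by auto
      then show ?thesis using dB Suc.prems
        by (simp add: q_def coeff_eq_0)
    qed
  qed
  then obtain c where c: "q = (\<Sum>m\<le>N. smult (c m) (B m))" using Suc.IH by blast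
  define c' where "c' = c(Suc N := coeff p (Suc N))"
  have "(\<Sum>m\<le>Suc N. smult (c' m) (B m)) = (\<Sum>m\<le>N. smult (c m) (B m)) + smult (coeff p (Suc N)) (B (Suc N))"
    by (simp add: c'_def)
  also have "\<dots> = p" using c by (metis q_def diff_add_cancel)
  finally show ?case by metis
qed

lemma coeff_extract:
  assumes "dual_seq B u" and "j \<le> N"
  shows "u j (\<Sum>m\<le>N. smult (c m) (B m)) = c j"
proof -
  have f: "is_form (u j)" using assms unfolding dual_seq_def by auto
  have "u j (\<Sum>m\<le>N. smult (c m) (B m)) = (\<Sum>m\<le>N. c m * u j (B m))"
    using f by (simp add: form_sum, simp add: is_form_def)
  also have "\<dots> = (\<Sum>m\<le>N. if m = j then c m else 0)"
    using assms(1) unfolding dual_seq_def by (intro sum.cong) auto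
  also have "\<dots> = c j" using assms(2) by simp
  finally show ?thesis .
qed

lemma expand:
  assumes "MPS B" "dual_seq B u" "degree p \<le> N"
  shows "p = (\<Sum>m\<le>N. smult (u m p) (B m))"
proof -
  obtain c where c: "p = (\<Sum>m\<le>N. smult (c m) (B m))" using expand_exists[OF assms(1,3)] by blast
  have "\<And>m. m \<le> N \<Longrightarrow> u m p = c m" using c coeff_extract[OF assms(2)] by simp
  then have "(\<Sum>m\<le>N. smult (u m p) (B m)) = (\<Sum>m\<le>N. smult (c m) (B m))"
    by (intro sum.cong) auto
  with c show ?thesis by simp
qed

theorem proposition5:
  fixes k :: nat and a :: "nat \<Rightarrow> complex"
    and B :: "nat \<Rightarrow> complex poly" and u :: "nat \<Rightarrow> complex poly \<Rightarrow> complex"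
  assumes "lowering_op (Lambda_op k a)"
    and "MPS B"
    and "dual_seq B u"
  shows "((\<forall>n. B1 k a B n = B n) \<longleftrightarrow>
            (\<forall>n. transp_op (Lambda_op k a) (u n) = (\<lambda>p. rho k a n * u (Suc n) p)))
       \<and> ((\<forall>n. transp_op (Lambda_op k a) (u n) = (\<lambda>p. rho k a n * u (Suc n) p)) \<longleftrightarrow>
            (\<forall>n. u n = (\<lambda>p. inverse (fact n) *
                     inverse (\<Prod>s=1..n. \<Sum>i=0..k. a i * of_nat s ^ i) *
                     ((transp_op (Lambda_op k a)) ^^ n) (u 0) p)))"
proof -
  let ?L = "Lambda_op k a"
  let ?T = "transp_op ?L"
  have low: "lowering_op ?L" by fact
  have rnz: "\<And>n. rho k a n \<noteq> 0" using rho_nz[OF low] .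
  have fu: "\<And>n. is_form (u n)" using assms(3) unfolding dual_seq_def by auto
  have ud: "\<And>n m. u n (B m) = (if n = m then 1 else 0)" using assms(3) unfolding dual_seq_def by auto
  have Lsm: "\<And>c p. ?L (smult c p) = smult c (?L p)" using low unfolding lowering_op_def by auto
  have B0: "B 0 = 1"
    using assms(2) unfolding MPS_def by (metis degree_0_id one_pCons)
  have L1: "?L 1 = 0" using low unfolding lowering_op_def by auto
  have fsm: "\<And>n c p. u n (smult c p) = c * u n p" using fu unfolding is_form_def by auto
  have AB: "(\<forall>n. B1 k a B n = B n) \<longleftrightarrow> (\<forall>n. ?L (B (Suc n)) = smult (rho k a n) (B n))"
  proof -
    have e: "B1 k a B n = smult (inverse (rho k a n)) (?L (B (Suc n)))" for n
      unfolding B1_def rho_def by (simp add: inverse_mult_distrib)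
    have "B1 k a B n = B n \<longleftrightarrow> ?L (B (Suc n)) = smult (rho k a n) (B n)" for n
    proof
      assume "B1 k a B n = B n"
      then have "smult (rho k a n) (B1 k a B n) = smult (rho k a n) (B n)" by simp
      then show "?L (B (Suc n)) = smult (rho k a n) (B n)" using rnz[of n] by (simp add: e)
    next
      assume "?L (B (Suc n)) = smult (rho k a n) (B n)"
      then show "B1 k a B n = B n" using rnz[of n] by (simp add: e)
    qed
    then show ?thesis by blast
  qed
  have P1: "(\<forall>n. ?L (B (Suc n)) = smult (rho k a n) (B n)) \<longleftrightarrow>
            (\<forall>n. ?T (u n) = (\<lambda>p. rho k a n * u (Suc n) p))"
  proof
    assume H: "\<forall>n. ?L (B (Suc n)) = smult (rho k a n) (B n)"
    show "\<forall>n. ?T (u n) = (\<lambda>p. rho k a n * u (Suc n) p)"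
    proof (intro allI ext)
      fix n and p :: "complex poly"
      define N where "N = degree p"
      have pe: "p = (\<Sum>m\<le>N. smult (u m p) (B m))"
        using expand[OF assms(2,3)] N_def by simp
      have LB: "u n (?L (B m)) = (if m = Suc n then rho k a n else 0)" for m
      proof (cases m)
        case 0 then show ?thesis by (simp add: B0 L1 form_zero[OF fu])
      next
        case (Suc j) then show ?thesis using H by (auto simp: fsm ud)
      qed
      have "?T (u n) p = u n (?L p)" by (simp add: transp_op_def)
      also have "\<dots> = (\<Sum>m\<le>N. u m p * u n (?L (B m)))"
        by (subst pe) (simp add: lowering_sum[OF low] form_sum[OF fu] Lsm fsm)
      also have "\<dots> = (\<Sum>m\<le>N. u m p * (if m = Suc n then rho k a n else 0))"
        by (simp add: LB)
      also have "\<dots> = rho k a n * (\<Sum>m\<le>N. u m p * u (Suc n) (B m))"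
        by (simp add: sum_distrib_left ud) (intro sum.cong, auto)
      also have "(\<Sum>m\<le>N. u m p * u (Suc n) (B m)) = u (Suc n) p"
      proof -
        have "u (Suc n) p = u (Suc n) (\<Sum>m\<le>N. smult (u m p) (B m))" using pe by (rule arg_cong)
        then show ?thesis by (simp add: form_sum[OF fu] fsm)
      qed
      finally show "?T (u n) p = rho k a n * u (Suc n) p" .
    qed
  next
    assume H: "\<forall>n. ?T (u n) = (\<lambda>p. rho k a n * u (Suc n) p)"
    show "\<forall>n. ?L (B (Suc n)) = smult (rho k a n) (B n)"
    proof
      fix n
      have dg: "degree (?L (B (Suc n))) \<le> n"
        using degree_Lambda[of k a "B (Suc n)"] assms(2) unfolding MPS_def by simp
      have c: "u m (?L (B (Suc n))) = (if m = n then rho k a n else 0)" for m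
      proof -
        have "u m (?L (B (Suc n))) = ?T (u m) (B (Suc n))" by (simp add: transp_op_def)
        also have "\<dots> = rho k a m * u (Suc m) (B (Suc n))" using H by simp
        finally show ?thesis by (simp add: ud)
      qed
      have "?L (B (Suc n)) = (\<Sum>m\<le>n. smult (u m (?L (B (Suc n)))) (B m))"
        using expand[OF assms(2,3) dg] .
      also have "\<dots> = (\<Sum>m\<le>n. if m = n then smult (rho k a n) (B n) else 0)"
        by (intro sum.cong) (auto simp: c)
      also have "\<dots> = smult (rho k a n) (B n)" by simp
      finally show "?L (B (Suc n)) = smult (rho k a n) (B n)" .
    qed
  qed
  define W where "W n = (?T ^^ n) (u 0)" for n
  define P where "P n = (\<Prod>s=1..n. \<Sum>i=0..k. a i * (of_nat s :: complex) ^ i)" for n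
  define K where "K n = inverse (fact n) * inverse (P n)" for n
  have WS: "W (Suc n) p = W n (?L p)" for n p by (simp add: W_def transp_op_def)
  have PS: "P (Suc n) = P n * (\<Sum>i=0..k. a i * of_nat (Suc n) ^ i)" for n
    unfolding P_def by (simp add: prod.nat_ivl_Suc')
  have KS: "K (Suc n) = K n * inverse (rho k a n)" for n
  proof -
    have "fact (Suc n) * P (Suc n) = (fact n * P n) * (rho k a n :: complex)"
      unfolding rho_def PS fact_Suc by simp
    then have "inverse (fact (Suc n) * P (Suc n)) = inverse (fact n * P n) * inverse (rho k a n :: complex)"
      by (metis inverse_mult_distrib)
    then show ?thesis unfolding K_def by (simp add: inverse_mult_distrib mult.assoc)
  qed
  have P2: "(\<forall>n. ?T (u n) = (\<lambda>p. rho k a n * u (Suc n) p)) \<longleftrightarrow>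
            (\<forall>n. u n = (\<lambda>p. K n * W n p))"
  proof
    assume H: "\<forall>n. ?T (u n) = (\<lambda>p. rho k a n * u (Suc n) p)"
    show "\<forall>n. u n = (\<lambda>p. K n * W n p)"
    proof
      fix n show "u n = (\<lambda>p. K n * W n p)"
      proof (induction n)
        case 0 then show ?case by (simp add: K_def P_def W_def)
      next
        case (Suc n)
        show ?case
        proof
          fix p :: "complex poly"
          have "rho k a n * u (Suc n) p = u n (?L p)"
            using H[rule_format, of n] unfolding transp_op_def by metis
          then have "u (Suc n) p = inverse (rho k a n) * u n (?L p)"
            using rnz[of n] by (simp add: field_simps)
          also have "\<dots> = K (Suc n) * W (Suc n) p"
            using Suc.IH by (simp add: KS WS)
          finally show "u (Suc n) p = K (Suc n) * W (Suc n) p" .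
        qed
      qed
    qed
  next
    assume H: "\<forall>n. u n = (\<lambda>p. K n * W n p)"
    show "\<forall>n. ?T (u n) = (\<lambda>p. rho k a n * u (Suc n) p)"
    proof (intro allI ext)
      fix n and p :: "complex poly"
      have "?T (u n) p = K n * W (Suc n) p"
        using H by (simp add: transp_op_def WS)
      also have "\<dots> = rho k a n * (K (Suc n) * W (Suc n) p)"
        using rnz[of n] by (simp add: KS)
      also have "\<dots> = rho k a n * u (Suc n) p" using H by simp
      finally show "?T (u n) p = rho k a n * u (Suc n) p" .
    qed
  qed
  show ?thesis
    using AB P1 P2 unfolding K_def P_def W_def by simp
qed

end
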